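(* Let $\varepsilon>0$ and let $\alpha,\beta\in\mathbb{Z}[\mathrm{i}]$ be non-zero multiplicatively independent Gaussian integers with $|\alpha|>1$ and $|\beta|>1$. Then there exist integers $m,n>0$ such that $|\alpha^m-\beta^n|<\varepsilon|\beta^n|$.
   Context: $\alpha,\beta$ are multiplicatively independent if there are no positive integers $j,k$ with $\beta^j=\alpha^k$. *)

theory Defs
  imports Complex_Main
begin

definition gaussian_int :: "complex \<Rightarrow> bool" where
  "gaussian_int z \<longleftrightarrow> Re z \<in> \<int> \<and> Im z \<in> \<int>"

definition mult_independent :: "complex \<Rightarrow> complex \<Rightarrow> bool" where
  "mult_independent \<alpha> \<beta> \<longleftrightarrow> \<not> (\<exists>j k :: nat. j > 0 \<and> k > 0 \<and> \<beta> ^ j = \<alpha> ^ k)"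

end

theory Submission
  imports Defs "HOL-Analysis.Analysis"
begin

lemma pow_ivl:
  fixes x s :: real
  assumes "1 \<le> x" "1 < s"
  shows "\<exists>n. s^n \<le> x \<and> x < s^Suc n"
proof -
  obtain N where N: "x < s^N" using real_arch_pow[OF assms(2)] by blast
  define k where "k = (LEAST k. x < s^k)"
  have k: "x < s^k" unfolding k_def by (rule LeastI[of _ N], rule N)
  have "k \<noteq> 0" using k assms(1) by (cases k) auto
  then obtain n where kn: "k = Suc n" by (cases k) auto
  have "\<not> x < s^n" using not_less_Least[of n "\<lambda>k. x < s^k"] kn k_def by simp
  then show ?thesis using k kn by (intro exI[of _ n]) auto
qed

theorem corollary2p3:
  fixes \<epsilon> :: real and \<alpha> \<beta> :: complex
  assumes "\<epsilon> > 0"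
    and "gaussian_int \<alpha>" and "gaussian_int \<beta>"
    and "\<alpha> \<noteq> 0" and "\<beta> \<noteq> 0"
    and "mult_independent \<alpha> \<beta>"
    and "norm \<alpha> > 1" and "norm \<beta> > 1"
  shows "\<exists>m n :: nat. m > 0 \<and> n > 0 \<and> norm (\<alpha> ^ m - \<beta> ^ n) < \<epsilon> * norm (\<beta> ^ n)"
proof -
  let ?r = "norm \<alpha>" and ?s = "norm \<beta>"
  have "\<forall>m. \<exists>n. ?s^n \<le> norm (\<alpha>^m) \<and> norm (\<alpha>^m) < ?s^Suc n"
  proof
    fix m
    have "1 \<le> norm (\<alpha>^m)" unfolding norm_power using assms(7) by (simp add: one_le_power)
    then show "\<exists>n. ?s^n \<le> norm (\<alpha>^m) \<and> norm (\<alpha>^m) < ?s^Suc n"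
      using pow_ivl assms(8) by blast
  qed
  then obtain nf where nf: "\<And>m. ?s^(nf m) \<le> norm (\<alpha>^m) \<and> norm (\<alpha>^m) < ?s^Suc (nf m)"
    by metis
  define w where "w m = \<alpha>^m / \<beta>^(nf m)" for m
  have wlo: "1 \<le> norm (w m)" for m
  proof -
    have "0 < ?s ^ nf m" using assms(5) by simp
    then show ?thesis using nf[of m] by (simp add: w_def norm_divide norm_power le_divide_eq)
  qed
  have whi: "norm (w m) \<le> ?s" for m
  proof -
    have "norm (\<alpha>^m) < ?s * ?s^(nf m)" using nf[of m] by simp
    then show ?thesis using assms(8) by (simp add: w_def norm_divide norm_power divide_le_eq)
  qed
  have "bounded (range w)" using whi by (auto simp: bounded_iff)
  then obtain l rr where rr: "strict_mono rr" and lim: "(w \<circ> rr) \<longlonglongrightarrow> l"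
    using bounded_imp_convergent_subsequence by blast
  define \<delta> where "\<delta> = min \<epsilon> (?r - 1)"
  have dpos: "\<delta> > 0" using assms(1,7) by (simp add: \<delta>_def)
  from LIMSEQ_imp_Cauchy[OF lim] dpos obtain M where
    M: "\<And>i j. i \<ge> M \<Longrightarrow> j \<ge> M \<Longrightarrow> dist ((w \<circ> rr) i) ((w \<circ> rr) j) < \<delta>"
    unfolding Cauchy_def by blast
  define m where "m = rr M"
  define m' where "m' = rr (Suc M)"
  have mm: "m < m'" using rr by (simp add: m_def m'_def strict_mono_def)
  have close: "norm (w m' - w m) < \<delta>" using M[of "Suc M" M] by (simp add: m_def m'_def dist_norm)
  define a where "a = m' - m"
  define \<eta> where "\<eta> = w m' / w m - 1"
  have wm0: "w m \<noteq> 0" using wlo[of m] by auto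
  have eta: "norm \<eta> < \<delta>"
  proof -
    have "norm \<eta> = norm (w m' - w m) / norm (w m)" using wm0
      by (simp add: \<eta>_def norm_divide[symmetric] diff_divide_distrib)
    also have "\<dots> \<le> norm (w m' - w m)" using wlo[of m] close
      by (simp add: divide_le_eq mult_le_cancel_left1)
    finally show ?thesis using close by simp
  qed
  show ?thesis
  proof (cases "nf m < nf m'")
    case True
    define b where "b = nf m' - nf m"
    have "\<alpha>^m' = \<alpha>^a * \<alpha>^m" using mm by (simp add: a_def power_add[symmetric])
    moreover have "\<beta>^(nf m') = \<beta>^b * \<beta>^(nf m)" using True by (simp add: b_def power_add[symmetric])
    ultimately have ratio: "w m' / w m = \<alpha>^a / \<beta>^b" using assms(4,5)
      by (simp add: w_def field_simps)
    have "\<alpha>^a - \<beta>^b = \<eta> * \<beta>^b" using assms(5) ratio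
      by (simp add: \<eta>_def field_simps)
    then have "norm (\<alpha>^a - \<beta>^b) = norm \<eta> * norm (\<beta>^b)" by (simp add: norm_mult)
    also have "\<dots> < \<epsilon> * norm (\<beta>^b)" using eta assms(5)
      by (intro mult_strict_right_mono) (auto simp: \<delta>_def)
    finally show ?thesis using mm True by (intro exI[of _ a] exI[of _ b]) (simp add: a_def b_def)
  next
    case False
    define b where "b = nf m - nf m'"
    have "\<alpha>^m' = \<alpha>^a * \<alpha>^m" using mm by (simp add: a_def power_add[symmetric])
    moreover have "\<beta>^(nf m) = \<beta>^b * \<beta>^(nf m')" using False by (simp add: b_def power_add[symmetric])
    ultimately have ratio: "w m' / w m = \<alpha>^a * \<beta>^b" using assms(4,5)
      by (simp add: w_def field_simps)
    have a1: "a \<ge> 1" using mm by (simp add: a_def)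
    have "?r \<le> ?r^a" using assms(7) a1 by (metis power_one_right power_increasing less_imp_le)
    also have "\<dots> \<le> ?r^a * ?s^b"
    proof -
      have "1 \<le> ?s^b" using assms(8) by (simp add: one_le_power)
      moreover have "0 \<le> ?r^a" by simp
      ultimately show ?thesis by (metis mult_le_cancel_left1 mult.commute mult_left_mono mult.right_neutral)
    qed
    also have "\<dots> = norm (w m' / w m)" by (simp add: ratio norm_mult norm_power)
    also have "\<dots> \<le> 1 + norm \<eta>" using norm_triangle_ineq[of \<eta> 1] by (simp add: \<eta>_def)
    finally have "?r - 1 \<le> norm \<eta>" by simp
    with eta show ?thesis by (simp add: \<delta>_def)
  qed
qed

end
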